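(* Let $G$ be a complete edge-colored graph with vertex set $V$, and for every strong module $M$ of $G$ let $\ell^M$ be a labeling of the quotient graph $G[M]/\mathbb{P}_{\max}(M)$. Define the relation $\prec$ on $V$ by: for distinct $u,v\in V$, $u\prec v$ iff $\ell^{M^{u,v}}(M^{u,v}_u)<\ell^{M^{u,v}}(M^{u,v}_v)$. Then $\prec$ is a strict total order on $V$, and consequently the map $\ell_\prec:V\to\{1,\dots,|V|\}$ with $\ell_\prec(u)<\ell_\prec(v)\iff u\prec v$ is a labeling of $G$.
   Context: A complete edge-colored graph is a complete graph on a finite set $V$ with edges partitioned into nonempty color classes. A module is a set $M\subseteq V$ such that for every $v\notin M$ all edges $\{u,v\}$, $u\in M$, have the same color; a strong module is a nonempty module that is comparable by inclusion or disjoint with every other module. The strong modules form a hierarchy (tree) containing $V$ and all singletons. For a strong module $M$ with $|M|\ge2$, $\mathbb{P}_{\max}(M)$ is the set of inclusion-maximal strong modules properly contained in $M$ (a partition of $M$), and $G[M]/\mathbb{P}_{\max}(M)$ is the complete graph on $\mathbb{P}_{\max}(M)$ in which $\{M_a,M_b\}$ has the common color of all edges between $M_a$ and $M_b$; for $|M|=1$ it is the one-vertex graph. A labeling of a graph with vertex set $W$ is a bijection $W\to\{1,\dots,|W|\}$. For distinct $u,v\in V$, $M^{u,v}$ is the inclusion-minimal strong module containing $u$ and $v$, and $M^{u,v}_u,M^{u,v}_v\in\mathbb{P}_{\max}(M^{u,v})$ are the (distinct) members containing $u$ and $v$, respectively. A strict total order is an irreflexive, transitive relation in which any two distinct elements are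 comparable. *)

theory Defs
  imports Main
begin

text \<open>A complete edge-colored graph on the finite vertex set V is given by a
  symmetric colouring function col (only its values on distinct pairs of V matter;
  the colour classes are the nonempty fibres of col).\<close>

definition ce_graph :: "'a set \<Rightarrow> ('a \<Rightarrow> 'a \<Rightarrow> 'c) \<Rightarrow> bool" where
  "ce_graph V col \<longleftrightarrow> finite V \<and> (\<forall>u\<in>V. \<forall>v\<in>V. u \<noteq> v \<longrightarrow> col u v = col v u)"

definition is_module :: "'a set \<Rightarrow> ('a \<Rightarrow> 'a \<Rightarrow> 'c) \<Rightarrow> 'a set \<Rightarrow> bool" where
  "is_module V col M \<longleftrightarrow> M \<subseteq> V \<and>
     (\<forall>v\<in>V - M. \<forall>u\<in>M. \<forall>u'\<in>M. col u v = col u' v)"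

definition strong_module :: "'a set \<Rightarrow> ('a \<Rightarrow> 'a \<Rightarrow> 'c) \<Rightarrow> 'a set \<Rightarrow> bool" where
  "strong_module V col M \<longleftrightarrow> M \<noteq> {} \<and> is_module V col M \<and>
     (\<forall>M'. is_module V col M' \<longrightarrow> M \<subseteq> M' \<or> M' \<subseteq> M \<or> M \<inter> M' = {})"

definition Pmax :: "'a set \<Rightarrow> ('a \<Rightarrow> 'a \<Rightarrow> 'c) \<Rightarrow> 'a set \<Rightarrow> 'a set set" where
  "Pmax V col M = {M'. strong_module V col M' \<and> M' \<subset> M \<and>
     (\<forall>M''. strong_module V col M'' \<and> M'' \<subset> M \<and> M' \<subseteq> M'' \<longrightarrow> M'' = M')}"

text \<open>Vertex set of the quotient graph G[M]/Pmax(M) (one vertex if |M| = 1).\<close>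
definition quot_vertices :: "'a set \<Rightarrow> ('a \<Rightarrow> 'a \<Rightarrow> 'c) \<Rightarrow> 'a set \<Rightarrow> 'a set set" where
  "quot_vertices V col M = (if card M = 1 then {M} else Pmax V col M)"

definition is_labeling :: "('b \<Rightarrow> nat) \<Rightarrow> 'b set \<Rightarrow> bool" where
  "is_labeling f W \<longleftrightarrow> bij_betw f W {1..card W}"

definition Muv :: "'a set \<Rightarrow> ('a \<Rightarrow> 'a \<Rightarrow> 'c) \<Rightarrow> 'a \<Rightarrow> 'a \<Rightarrow> 'a set" where
  "Muv V col u v = (THE M. strong_module V col M \<and> u \<in> M \<and> v \<in> M \<and>
     (\<forall>M'. strong_module V col M' \<and> u \<in> M' \<and> v \<in> M' \<longrightarrow> M \<subseteq> M'))"

definition Muv_part :: "'a set \<Rightarrow> ('a \<Rightarrow> 'a \<Rightarrow> 'c) \<Rightarrow> 'a \<Rightarrow> 'a \<Rightarrow> 'a \<Rightarrow> 'a set" where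
  "Muv_part V col u v x = (THE X. X \<in> Pmax V col (Muv V col u v) \<and> x \<in> X)"

definition induced_rel :: "'a set \<Rightarrow> ('a \<Rightarrow> 'a \<Rightarrow> 'c) \<Rightarrow> ('a set \<Rightarrow> 'a set \<Rightarrow> nat) \<Rightarrow> 'a rel" where
  "induced_rel V col lab = {(u, v). u \<in> V \<and> v \<in> V \<and> u \<noteq> v \<and>
     lab (Muv V col u v) (Muv_part V col u v u) < lab (Muv V col u v) (Muv_part V col u v v)}"

end

theory Submission
  imports Defs
begin

definition part :: "'a set \<Rightarrow> ('a \<Rightarrow> 'a \<Rightarrow> 'c) \<Rightarrow> 'a set \<Rightarrow> 'a \<Rightarrow> 'a set" where
  "part V col M x = (THE X. X \<in> Pmax V col M \<and> x \<in> X)"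

lemma Muv_part_eq: "Muv_part V col u v x = part V col (Muv V col u v) x"
  unfolding Muv_part_def part_def by simp

lemma Muv_sym: "Muv V col u v = Muv V col v u"
  unfolding Muv_def by (rule arg_cong[where f=The], rule ext, blast)

lemma strong_single: "x \<in> V \<Longrightarrow> strong_module V col {x}"
  unfolding strong_module_def is_module_def by auto

lemma strong_V: "V \<noteq> {} \<Longrightarrow> strong_module V col V"
  unfolding strong_module_def is_module_def by auto

lemma strong_sub: "strong_module V col M \<Longrightarrow> M \<subseteq> V"
  unfolding strong_module_def is_module_def by auto

lemma strong_cmp: "strong_module V col A \<Longrightarrow> strong_module V col B \<Longrightarrow> x \<in> A \<Longrightarrow> x \<in> B
   \<Longrightarrow> A \<subseteq> B \<or> B \<subseteq> A"
  unfolding strong_module_def by blast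

context
  fixes V :: "'a set" and col :: "'a \<Rightarrow> 'a \<Rightarrow> 'c"
  assumes fin: "finite V"
begin

lemma Muv_prop:
  assumes "u \<in> V" "v \<in> V"
  shows "strong_module V col (Muv V col u v) \<and> u \<in> Muv V col u v \<and> v \<in> Muv V col u v \<and>
     (\<forall>M'. strong_module V col M' \<and> u \<in> M' \<and> v \<in> M' \<longrightarrow> Muv V col u v \<subseteq> M')"
proof -
  let ?P = "\<lambda>M. strong_module V col M \<and> u \<in> M \<and> v \<in> M"
  have "?P V" using assms strong_V[of V col] by blast
  then obtain M where M: "?P M" "\<forall>M'. ?P M' \<longrightarrow> card M \<le> card M'"
    using ex_has_least_nat[of ?P V card] by blast
  have min: "\<forall>M'. ?P M' \<longrightarrow> M \<subseteq> M'"
  proof (intro allI impI)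
    fix M' assume H: "?P M'"
    have "M \<subseteq> M' \<or> M' \<subseteq> M" using strong_cmp[of V col M M' u] M H by blast
    moreover have "finite M" using M(1) strong_sub fin finite_subset by metis
    moreover have "card M \<le> card M'" using M H by blast
    ultimately show "M \<subseteq> M'" by (metis card_seteq)
  qed
  have "Muv V col u v = M"
    unfolding Muv_def
    apply (rule the_equality)
    using M min apply blast
    using M min by blast
  then show ?thesis using M min by simp
qed

lemma Pmax_exists:
  assumes "strong_module V col M" "strong_module V col N" "N \<subset> M"
  shows "\<exists>X\<in>Pmax V col M. N \<subseteq> X"
proof -
  let ?P = "\<lambda>N'. strong_module V col N' \<and> N' \<subset> M \<and> N \<subseteq> N'"
  have finM: "finite M" using assms(1) strong_sub fin finite_subset by metis
  obtain X where X: "?P X" "\<forall>Y. ?P Y \<longrightarrow> card M - card X \<le> card M - card Y"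
    using ex_has_least_nat[of ?P N "\<lambda>Y. card M - card Y"] assms by blast
  have "X \<in> Pmax V col M"
    unfolding Pmax_def mem_Collect_eq
  proof (intro conjI allI impI)
    show "strong_module V col X" "X \<subset> M" using X by auto
  next
    fix M'' assume H0: "strong_module V col M'' \<and> M'' \<subset> M \<and> X \<subseteq> M''"
    then have H: "strong_module V col M''" "M'' \<subseteq> M" "M'' \<noteq> M" "X \<subseteq> M''" by auto
    then have "?P M''" using X by auto
    then have c1: "card M - card X \<le> card M - card M''" using X by blast
    have "card M'' < card M" using H finM by (meson psubsetI psubset_card_mono)
    moreover have "card X \<le> card M''" using H finM by (meson card_mono finite_subset)
    ultimately have "card X = card M''" using c1 by linarith
    have fM'': "finite M''" using H(2) finM finite_subset by blast
    show "M'' = X" using card_seteq[OF fM'' H(4)] \<open>card X = card M''\<close> by simp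
  qed
  then show ?thesis using X by blast
qed

lemma Pmax_unique:
  assumes "X \<in> Pmax V col M" "Y \<in> Pmax V col M" "x \<in> X" "x \<in> Y"
  shows "X = Y"
proof -
  have X: "strong_module V col X" "X \<subset> M" and Xm: "\<forall>M''. strong_module V col M'' \<and> M'' \<subset> M \<and> X \<subseteq> M'' \<longrightarrow> M'' = X"
    using assms(1) unfolding Pmax_def by auto
  have Y: "strong_module V col Y" "Y \<subset> M" and Ym: "\<forall>M''. strong_module V col M'' \<and> M'' \<subset> M \<and> Y \<subseteq> M'' \<longrightarrow> M'' = Y"
    using assms(2) unfolding Pmax_def by auto
  have "X \<subseteq> Y \<or> Y \<subseteq> X" using strong_cmp[OF X(1) Y(1) assms(3,4)] .
  then show ?thesis using X Y Xm Ym by metis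
qed

lemma part_prop:
  assumes "strong_module V col M" "x \<in> M" "M \<noteq> {x}"
  shows "part V col M x \<in> Pmax V col M \<and> x \<in> part V col M x"
proof -
  have "x \<in> V" using assms strong_sub by blast
  then have "strong_module V col {x}" by (rule strong_single)
  then obtain X where X: "X \<in> Pmax V col M" "{x} \<subseteq> X"
    using Pmax_exists[OF assms(1)] assms by blast
  have "part V col M x = X"
    unfolding part_def
    apply (rule the_equality)
    using X apply blast
    using X Pmax_unique[where M=M and x=x and Y=X] by blast
  then show ?thesis using X by simp
qed

lemma part_contains:
  assumes "strong_module V col M" "strong_module V col N" "N \<subset> M" "x \<in> N"
  shows "N \<subseteq> part V col M x"
proof -
  obtain X where X: "X \<in> Pmax V col M" "N \<subseteq> X" using Pmax_exists assms by blast
  have "M \<noteq> {x}" using assms by blast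
  then have "part V col M x \<in> Pmax V col M \<and> x \<in> part V col M x"
    using part_prop assms(1,4) \<open>M \<noteq> {x}\<close> assms(3) by blast
  then have "part V col M x = X" using X assms(4) Pmax_unique[where X="part V col M x" and M=M and Y=X and x=x] by blast
  then show ?thesis using X by simp
qed

lemma Muv_eq:
  assumes "strong_module V col M" "u \<in> M" "w \<in> M" "part V col M u \<noteq> part V col M w"
  shows "Muv V col u w = M"
proof (rule ccontr)
  assume ne: "Muv V col u w \<noteq> M"
  have uw: "u \<in> V" "w \<in> V" using assms strong_sub by blast+
  note P = Muv_prop[OF uw]
  have sub: "Muv V col u w \<subset> M" using P assms ne by blast
  have "Muv V col u w \<subseteq> part V col M u" using part_contains[OF assms(1) _ sub] P by blast
  moreover have "Muv V col u w \<subseteq> part V col M w" using part_contains[OF assms(1) _ sub] P by blast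
  ultimately have "w \<in> part V col M u" "w \<in> part V col M w" using P by blast+
  moreover have "u \<noteq> w" using assms(4) by auto
  then have "M \<noteq> {u}" "M \<noteq> {w}" using assms(2,3) by auto
  ultimately have "w \<in> part V col M u" "part V col M u \<in> Pmax V col M"
    "w \<in> part V col M w" "part V col M w \<in> Pmax V col M"
    using part_prop[OF assms(1,2)] part_prop[OF assms(1,3)] by blast+
  then show False using assms(4) Pmax_unique[where X="part V col M u" and Y="part V col M w" and M=M and x=w] by blast
qed

lemma Muv_parts:
  assumes "u \<in> V" "v \<in> V" "u \<noteq> v"
  shows "part V col (Muv V col u v) u \<in> Pmax V col (Muv V col u v)"
    "part V col (Muv V col u v) v \<in> Pmax V col (Muv V col u v)"
    "part V col (Muv V col u v) u \<noteq> part V col (Muv V col u v) v"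
    "quot_vertices V col (Muv V col u v) = Pmax V col (Muv V col u v)"
proof -
  note P = Muv_prop[OF assms(1,2)]
  let ?M = "Muv V col u v"
  have n1: "?M \<noteq> {u}" "?M \<noteq> {v}" using P assms by auto
  have A: "part V col ?M u \<in> Pmax V col ?M \<and> u \<in> part V col ?M u"
    "part V col ?M v \<in> Pmax V col ?M \<and> v \<in> part V col ?M v"
    using part_prop P n1 by blast+
  then show "part V col ?M u \<in> Pmax V col ?M" "part V col ?M v \<in> Pmax V col ?M" by auto
  show "part V col ?M u \<noteq> part V col ?M v"
  proof
    assume eq: "part V col ?M u = part V col ?M v"
    let ?X = "part V col ?M u"
    have "strong_module V col ?X" "?X \<subset> ?M" using A unfolding Pmax_def by auto
    moreover have "u \<in> ?X" "v \<in> ?X" using A eq by auto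
    ultimately show False using P by blast
  qed
  have "card ?M \<noteq> 1" using n1 P by (metis card_1_singletonE singletonD)
  then show "quot_vertices V col ?M = Pmax V col ?M" unfolding quot_vertices_def by simp
qed

end

lemma finite_order_labeling:
  assumes fin: "finite V" and so: "strict_linear_order_on V R" and sub: "R \<subseteq> V \<times> V"
  shows "\<exists>f. is_labeling f V \<and> (\<forall>u\<in>V. \<forall>v\<in>V. f u < f v \<longleftrightarrow> (u, v) \<in> R)"
proof -
  have tr: "trans R" and ir: "irrefl R" and to: "total_on V R"
    using so unfolding strict_linear_order_on_def by auto
  define f where "f u = card {w\<in>V. (w,u)\<in>R} + 1" for u
  have lt: "f u < f v" if "(u,v) \<in> R" for u v
  proof -
    have "insert u {w\<in>V. (w,u)\<in>R} \<subseteq> {w\<in>V. (w,v)\<in>R}"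
      using that tr sub unfolding trans_def by blast
    moreover have nu: "u \<notin> {w\<in>V. (w,u)\<in>R}" using ir unfolding irrefl_def by blast
    moreover have "finite {w\<in>V. (w,v)\<in>R}" using fin by simp
    ultimately have "card (insert u {w\<in>V. (w,u)\<in>R}) \<le> card {w\<in>V. (w,v)\<in>R}"
      using card_mono by blast
    moreover have "finite {w\<in>V. (w,u)\<in>R}" using fin by simp
    ultimately show ?thesis unfolding f_def using nu by simp
  qed
  have iff: "\<forall>u\<in>V. \<forall>v\<in>V. f u < f v \<longleftrightarrow> (u, v) \<in> R"
  proof (intro ballI iffI)
    fix u v assume "u \<in> V" "v \<in> V" "f u < f v"
    note H = this
    show "(u,v) \<in> R"
    proof (cases "u = v")
      case True then show ?thesis using H by simp
    next
      case False
      then have "(u,v) \<in> R \<or> (v,u) \<in> R" using to H(1,2) unfolding total_on_def by blast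
      moreover have "(v,u) \<notin> R" using lt[of v u] H(3) by linarith
      ultimately show ?thesis by blast
    qed
  next
    fix u v assume "u \<in> V" "v \<in> V" "(u,v) \<in> R"
    then show "f u < f v" using lt by blast
  qed
  have inj: "inj_on f V"
    unfolding inj_on_def
  proof (intro ballI impI)
    fix u v assume H: "u \<in> V" "v \<in> V" "f u = f v"
    show "u = v"
    proof (rule ccontr)
      assume "u \<noteq> v"
      then have "(u,v) \<in> R \<or> (v,u) \<in> R" using to H(1,2) unfolding total_on_def by blast
      then show False using lt[of u v] lt[of v u] H(3) by auto
    qed
  qed
  have img: "f ` V \<subseteq> {1..card V}"
  proof
    fix y assume "y \<in> f ` V"
    then obtain u where u: "u \<in> V" "y = f u" by blast
    have "{w\<in>V. (w,u)\<in>R} \<subseteq> V - {u}" using ir unfolding irrefl_def by blast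
    then have "card {w\<in>V. (w,u)\<in>R} \<le> card (V - {u})" using fin by (meson card_mono finite_Diff)
    also have "\<dots> = card V - 1" using u fin by simp
    finally have c: "card {w\<in>V. (w,u)\<in>R} \<le> card V - 1" .
    have "card V \<noteq> 0" using u fin by auto
    then show "y \<in> {1..card V}" using u c unfolding f_def by simp
  qed
  have "f ` V = {1..card V}"
    using card_subset_eq[OF finite_atLeastAtMost img] card_image[OF inj] by simp
  then have "is_labeling f V" unfolding is_labeling_def bij_betw_def using inj by simp
  then show ?thesis using iff by blast
qed

theorem lemma4p6:
  fixes V :: "'a set" and col :: "'a \<Rightarrow> 'a \<Rightarrow> 'c"
    and lab :: "'a set \<Rightarrow> 'a set \<Rightarrow> nat"
  assumes "ce_graph V col"
    and "\<And>M. strong_module V col M \<Longrightarrow> is_labeling (lab M) (quot_vertices V col M)"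
  shows "strict_linear_order_on V (induced_rel V col lab)
    \<and> (\<exists>f. is_labeling f V \<and>
          (\<forall>u\<in>V. \<forall>v\<in>V. f u < f v \<longleftrightarrow> (u, v) \<in> induced_rel V col lab))"
proof -
  have fin: "finite V" using assms(1) unfolding ce_graph_def by simp
  let ?R = "induced_rel V col lab"
  let ?M = "\<lambda>u v. Muv V col u v"
  let ?p = "\<lambda>M x. part V col M x"
  have Rdef: "(u,v) \<in> ?R \<longleftrightarrow> u \<in> V \<and> v \<in> V \<and> u \<noteq> v \<and>
      lab (?M u v) (?p (?M u v) u) < lab (?M u v) (?p (?M u v) v)" for u v
    unfolding induced_rel_def Muv_part_eq by simp
  have injl: "inj_on (lab M) (Pmax V col M)" if "strong_module V col M" "card M \<noteq> 1" for M
    using assms(2)[OF that(1)] that(2) unfolding is_labeling_def quot_vertices_def bij_betw_def by simp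
  have injuv: "lab (?M u v) (?p (?M u v) u) \<noteq> lab (?M u v) (?p (?M u v) v)"
    if "u \<in> V" "v \<in> V" "u \<noteq> v" for u v
  proof -
    note P = Muv_prop[OF fin that(1,2), where col=col]
    note Q = Muv_parts[OF fin that, where col=col]
    have I: "inj_on (lab (?M u v)) (Pmax V col (?M u v))"
      using assms(2)[of "?M u v"] P Q(4) unfolding is_labeling_def bij_betw_def by simp
    show ?thesis
    proof
      assume e: "lab (?M u v) (?p (?M u v) u) = lab (?M u v) (?p (?M u v) v)"
      have "?p (?M u v) u = ?p (?M u v) v" by (rule inj_onD[OF I e Q(1) Q(2)])
      with Q(3) show False by simp
    qed
  qed
  have sub: "?R \<subseteq> V \<times> V" unfolding induced_rel_def by auto
  have ir: "irrefl ?R" unfolding irrefl_def induced_rel_def by auto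
  have to: "total_on V ?R"
    unfolding total_on_def
  proof (intro ballI impI)
    fix u v assume H: "u \<in> V" "v \<in> V" "u \<noteq> v"
    have "?M v u = ?M u v" by (rule Muv_sym)
    note ne = injuv[OF H]
    show "(u,v) \<in> ?R \<or> (v,u) \<in> ?R"
    proof (cases "lab (?M u v) (?p (?M u v) u) < lab (?M u v) (?p (?M u v) v)")
      case True
      then show ?thesis using Rdef[of u v] H by simp
    next
      case False
      then have "lab (?M v u) (?p (?M v u) v) < lab (?M v u) (?p (?M v u) u)"
        using ne \<open>?M v u = ?M u v\<close> by simp
      then show ?thesis using Rdef[of v u] H by simp
    qed
  qed
  have tr: "trans ?R"
  proof (rule transI)
    fix u v w assume uv: "(u,v) \<in> ?R" and vw: "(v,w) \<in> ?R"
    have V: "u \<in> V" "v \<in> V" "w \<in> V" "u \<noteq> v" "v \<noteq> w" using uv vw Rdef by auto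
    note P1 = Muv_prop[OF fin V(1,2), where col=col]
    note P2 = Muv_prop[OF fin V(2,3), where col=col]
    note Q1 = Muv_parts[OF fin V(1,2,4), where col=col]
    note Q2 = Muv_parts[OF fin V(2,3,5), where col=col]
    let ?M1 = "?M u v" and ?M2 = "?M v w"
    have l1: "lab ?M1 (?p ?M1 u) < lab ?M1 (?p ?M1 v)" using uv Rdef by blast
    have l2: "lab ?M2 (?p ?M2 v) < lab ?M2 (?p ?M2 w)" using vw Rdef by blast
    have cmp: "?M1 \<subseteq> ?M2 \<or> ?M2 \<subseteq> ?M1" using strong_cmp[of V col ?M1 ?M2 v] P1 P2 by blast
    have conc: "(u,w) \<in> ?R" if M: "strong_module V col M" "u \<in> M" "w \<in> M"
       and lt: "lab M (?p M u) < lab M (?p M w)" for M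
    proof -
      have ne: "?p M u \<noteq> ?p M w" using lt by auto
      then have "u \<noteq> w" by auto
      moreover have "?M u w = M" using Muv_eq[OF fin M ne] .
      ultimately show ?thesis using Rdef lt V by simp
    qed
    show "(u,w) \<in> ?R"
    proof (cases "?M1 = ?M2")
      case True
      then show ?thesis using conc[of ?M1] P1 P2 l1 l2 by simp
    next
      case False
      show ?thesis
      proof (cases "?M1 \<subseteq> ?M2")
        case True
        then have ps: "?M1 \<subset> ?M2" using False by blast
        have "?M1 \<subseteq> ?p ?M2 v" using part_contains[OF fin _ _ ps, where x=v] P1 P2 by blast
        then have "u \<in> ?p ?M2 v" using P1 by blast
        moreover have "?M2 \<noteq> {u}" using P2 V by auto
        ultimately have "?p ?M2 u = ?p ?M2 v"
        proof -
          have "?p ?M2 u \<in> Pmax V col ?M2 \<and> u \<in> ?p ?M2 u"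
            using part_prop[OF fin, where col=col and M="?M2" and x=u] P2 \<open>u \<in> ?p ?M2 v\<close> \<open>?M2 \<noteq> {u}\<close> True P1 by blast
          then show ?thesis using Q2(1) \<open>u \<in> ?p ?M2 v\<close>
            Pmax_unique[OF fin, where col=col and X="?p ?M2 u" and Y="?p ?M2 v" and M="?M2" and x=u] by blast
        qed
        then show ?thesis using conc[of ?M2] P1 P2 l2 True by auto
      next
        case F2: False
        then have ps: "?M2 \<subset> ?M1" using cmp by blast
        have "?M2 \<subseteq> ?p ?M1 v" using part_contains[OF fin _ _ ps, where x=v] P1 P2 by blast
        then have "w \<in> ?p ?M1 v" using P2 by blast
        moreover have "?M1 \<noteq> {w}" using P1 V by auto
        ultimately have "?p ?M1 w = ?p ?M1 v"
        proof -
          have "?p ?M1 w \<in> Pmax V col ?M1 \<and> w \<in> ?p ?M1 w"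
            using part_prop[OF fin, where col=col and M="?M1" and x=w] P1 \<open>w \<in> ?p ?M1 v\<close> \<open>?M1 \<noteq> {w}\<close> ps P2 by blast
          then show ?thesis using Q1(2) \<open>w \<in> ?p ?M1 v\<close>
            Pmax_unique[OF fin, where col=col and X="?p ?M1 w" and Y="?p ?M1 v" and M="?M1" and x=w] by blast
        qed
        then show ?thesis using conc[of ?M1] P1 P2 l1 ps by auto
      qed
    qed
  qed
  have so: "strict_linear_order_on V ?R"
    unfolding strict_linear_order_on_def using tr ir to by simp
  show ?thesis using so finite_order_labeling[OF fin so sub] by blast
qed

end
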